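(* The $K$-bilinear map $\psi:\mathfrak{stl}_4(R)\times\mathfrak{stl}_4(R)\to\mathcal W$ defined below is a Leibniz $2$-cocycle, i.e. for all $x,y,z\in\mathfrak{stl}_4(R)$, $$\psi(x,[y,z])+\psi([x,z],y)-\psi([x,y],z)=0.$$
   Context: $K$ is a unital commutative ring, $R$ a unital associative $K$-algebra, free as a $K$-module with a basis containing $1$. Leibniz algebra: $K$-bilinear bracket with $[x,[y,z]]=[[x,y],z]-[[x,z],y]$. $\mathfrak{stl}_4(R)$ is the Leibniz algebra over $K$ generated by $X_{ij}(a)$, $a\in R$, $1\le i\ne j\le 4$, subject to: $X_{ij}$ is $K$-linear in $a$; $[X_{ij}(a),X_{jk}(b)]=X_{ik}(ab)$ and $[X_{ij}(a),X_{ki}(b)]=-X_{kj}(ba)$ for distinct $i,j,k$; $[X_{ij}(a),X_{kl}(b)]=0$ for $j\ne k$, $i\ne l$. With $H$ the $K$-span of all $[X_{ij}(a),X_{ji}(b)]$, one has $\mathfrak{stl}_4(R)=H\oplus\bigoplus_{i\ne j}X_{ij}(R)$ and each $a\mapsto X_{ij}(a)$ is injective. $R_2:=R/\mathcal I_2$ where $\mathcal I_2=2R+R[R,R]$ is the ideal generated by all $2a$ and $ab-ba$; $\bar a$ denotes the class of $a$ (so $R_2$ is commutative and $\bar a=-\bar a$). $\mathcal W=R_2^6$, and $\epsilon_m(\bar a)$ ($1\le m\le 6$) is the element with $m$-th coordinate $\bar a$ and others $0$. Let $P$ be the set of quadruples $(i,j,k,l)$ with $\{i,j,k,l\}=\{1,2,3,4\}$;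 $S_4$ acts on $P$ componentwise, and $G=\{(1),(13),(24),(13)(24)\}$. Partition $P$ into the six sets $(\sigma G)((1,2,3,4))$, $\sigma G\in S_4/G$ (so $(i,j,k,l)$, $(k,j,i,l)$, $(i,l,k,j)$, $(k,l,i,j)$ lie in the same class); label these classes $1,\dots,6$ with the class of $(1,2,3,4)$ labelled $1$, and let $\theta:P\to\{1,\dots,6\}$ send a quadruple to its label. Define $\psi$ as the $K$-bilinear map with $\psi(X_{ij}(a),X_{kl}(b))=\epsilon_{\theta((i,j,k,l))}(\overline{ab})$ for $a,b\in R$ and $i,j,k,l$ pairwise distinct, $\psi(X_{ij}(a),X_{kl}(b))=0$ if $i,j,k,l$ are not pairwise distinct, and $\psi(h,x)=\psi(x,h)=0$ for $h\in H$. *)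

theory Defs
  imports Complex_Main
begin

definition K_algebra :: "('k::comm_ring_1 \<Rightarrow> 'r::ring_1 \<Rightarrow> 'r) \<Rightarrow> bool" where
  "K_algebra sR \<longleftrightarrow> module sR \<and>
     (\<forall>k a b. sR k (a * b) = sR k a * b \<and> sR k (a * b) = a * sR k b)"

definition free_with_one_basis :: "('k::comm_ring_1 \<Rightarrow> 'r::ring_1 \<Rightarrow> 'r) \<Rightarrow> bool" where
  "free_with_one_basis sR \<longleftrightarrow>
     (\<exists>B. 1 \<in> B \<and> \<not> module.dependent sR B \<and> module.span sR B = UNIV)"

inductive_set I2 :: "'r::ring_1 set" where
  gen_two: "2 * a \<in> I2"
| gen_comm: "a * b - b * a \<in> I2"
| zero: "0 \<in> I2"
| add: "x \<in> I2 \<Longrightarrow> y \<in> I2 \<Longrightarrow> x + y \<in> I2"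
| lmul: "x \<in> I2 \<Longrightarrow> r * x \<in> I2"
| rmul: "x \<in> I2 \<Longrightarrow> x * r \<in> I2"

definition leibniz_algebra ::
  "('k::comm_ring_1 \<Rightarrow> 'l::ab_group_add \<Rightarrow> 'l) \<Rightarrow> ('l \<Rightarrow> 'l \<Rightarrow> 'l) \<Rightarrow> bool" where
  "leibniz_algebra smul br \<longleftrightarrow> module smul \<and>
     (\<forall>x y z. br (x + y) z = br x z + br y z \<and> br z (x + y) = br z x + br z y) \<and>
     (\<forall>k x y. br (smul k x) y = smul k (br x y) \<and> br x (smul k y) = smul k (br x y)) \<and>
     (\<forall>x y z. br x (br y z) = br (br x y) z - br (br x z) y)"

definition Pairs4 :: "(nat \<times> nat) set" where
  "Pairs4 = {(i, j). i \<in> {1..4} \<and> j \<in> {1..4} \<and> i \<noteq> j}"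

definition P4 :: "(nat \<times> nat \<times> nat \<times> nat) set" where
  "P4 = {(i, j, k, l). {i, j, k, l} = {1, 2, 3, 4}}"

text \<open>The class (sigma G)(1,2,3,4) containing (i,j,k,l), G = {(1),(13),(24),(13)(24)}.\<close>
fun Gclass :: "nat \<times> nat \<times> nat \<times> nat \<Rightarrow> (nat \<times> nat \<times> nat \<times> nat) set" where
  "Gclass (i, j, k, l) = {(i, j, k, l), (k, j, i, l), (i, l, k, j), (k, l, i, j)}"

definition theta_labelling :: "(nat \<times> nat \<times> nat \<times> nat \<Rightarrow> nat) \<Rightarrow> bool" where
  "theta_labelling \<theta> \<longleftrightarrow>
     (\<forall>q\<in>P4. \<theta> q \<in> {1..6}) \<and>
     (\<forall>q\<in>P4. \<forall>q'\<in>P4. \<theta> q = \<theta> q' \<longleftrightarrow> q' \<in> Gclass q) \<and>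
     \<theta> (1, 2, 3, 4) = 1"

definition stl4_relations ::
  "('k::comm_ring_1 \<Rightarrow> 'l::ab_group_add \<Rightarrow> 'l) \<Rightarrow> ('l \<Rightarrow> 'l \<Rightarrow> 'l) \<Rightarrow>
   ('k \<Rightarrow> 'r::ring_1 \<Rightarrow> 'r) \<Rightarrow> (nat \<Rightarrow> nat \<Rightarrow> 'r \<Rightarrow> 'l) \<Rightarrow> bool" where
  "stl4_relations smul br sR X \<longleftrightarrow>
     (\<forall>(i, j)\<in>Pairs4. \<forall>a b k. X i j (a + b) = X i j a + X i j b \<and> X i j (sR k a) = smul k (X i j a)) \<and>
     (\<forall>i\<in>{1..4}. \<forall>j\<in>{1..4}. \<forall>k\<in>{1..4}. i \<noteq> j \<and> j \<noteq> k \<and> i \<noteq> k \<longrightarrow>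
        (\<forall>a b. br (X i j a) (X j k b) = X i k (a * b) \<and>
               br (X i j a) (X k i b) = - X k j (b * a))) \<and>
     (\<forall>(i, j)\<in>Pairs4. \<forall>(k, l)\<in>Pairs4. j \<noteq> k \<and> i \<noteq> l \<longrightarrow>
        (\<forall>a b. br (X i j a) (X k l b) = 0))"

definition Hspan ::
  "('k::comm_ring_1 \<Rightarrow> 'l::ab_group_add \<Rightarrow> 'l) \<Rightarrow> ('l \<Rightarrow> 'l \<Rightarrow> 'l) \<Rightarrow>
   (nat \<Rightarrow> nat \<Rightarrow> 'r \<Rightarrow> 'l) \<Rightarrow> 'l set" where
  "Hspan smul br X = module.span smul {br (X i j a) (X j i b) | i j a b. (i, j) \<in> Pairs4}"

definition Xsum :: "(nat \<Rightarrow> nat \<Rightarrow> 'r \<Rightarrow> 'l::ab_group_add) \<Rightarrow> (nat \<Rightarrow> nat \<Rightarrow> 'r) \<Rightarrow> 'l" where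
  "Xsum X c = (\<Sum>(i, j)\<in>Pairs4. X i j (c i j))"

definition stl4_decomposition ::
  "('k::comm_ring_1 \<Rightarrow> 'l::ab_group_add \<Rightarrow> 'l) \<Rightarrow> ('l \<Rightarrow> 'l \<Rightarrow> 'l) \<Rightarrow>
   (nat \<Rightarrow> nat \<Rightarrow> 'r \<Rightarrow> 'l) \<Rightarrow> bool" where
  "stl4_decomposition smul br X \<longleftrightarrow>
     (\<forall>x. \<exists>h\<in>Hspan smul br X. \<exists>c. x = h + Xsum X c) \<and>
     (\<forall>h\<in>Hspan smul br X. \<forall>c. h + Xsum X c = 0 \<longrightarrow>
        h = 0 \<and> (\<forall>(i, j)\<in>Pairs4. X i j (c i j) = 0)) \<and>
     (\<forall>(i, j)\<in>Pairs4. inj (X i j))"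

definition comp ::
  "('k::comm_ring_1 \<Rightarrow> 'l::ab_group_add \<Rightarrow> 'l) \<Rightarrow> ('l \<Rightarrow> 'l \<Rightarrow> 'l) \<Rightarrow>
   (nat \<Rightarrow> nat \<Rightarrow> 'r \<Rightarrow> 'l) \<Rightarrow> nat \<Rightarrow> nat \<Rightarrow> 'l \<Rightarrow> 'r" where
  "comp smul br X i j x =
     (THE a. \<exists>h c. h \<in> Hspan smul br X \<and> x = h + Xsum X c \<and> c i j = a)"

text \<open>A representative in R of the m-th coordinate (in R_2 = R / I_2) of psi(x,y):
  the K-bilinear extension of psi(X_ij(a),X_kl(b)) = eps_theta(ijkl)(ab), vanishing on H.
  Two elements of W = R_2^6 are equal iff all coordinate representatives agree modulo I2.\<close>
definition psi_rep ::
  "('k::comm_ring_1 \<Rightarrow> 'l::ab_group_add \<Rightarrow> 'l) \<Rightarrow> ('l \<Rightarrow> 'l \<Rightarrow> 'l) \<Rightarrow>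
   (nat \<Rightarrow> nat \<Rightarrow> 'r::ring_1 \<Rightarrow> 'l) \<Rightarrow> (nat \<times> nat \<times> nat \<times> nat \<Rightarrow> nat) \<Rightarrow>
   nat \<Rightarrow> 'l \<Rightarrow> 'l \<Rightarrow> 'r" where
  "psi_rep smul br X \<theta> m x y =
     (\<Sum>(i, j, k, l)\<in>{q \<in> P4. \<theta> q = m}. comp smul br X i j x * comp smul br X k l y)"

end

theory Submission
  imports Defs
begin


lemma I2_neg: "x \<in> I2 \<Longrightarrow> - x \<in> I2"
  using I2.lmul[of x "-1"] by simp
lemma I2_diff: "x \<in> I2 \<Longrightarrow> y \<in> I2 \<Longrightarrow> x - y \<in> I2"
  using I2.add[of x "-y"] I2_neg[of y] by simp
lemma I2_eq: "x = y \<Longrightarrow> x - y \<in> I2"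
  by (simp add: I2.zero)

quotient_type (overloaded) 'a r2 = "'a::ring_1" / "\<lambda>x y. x - y \<in> I2"
proof (rule equivpI)
  show "reflp (\<lambda>x y::'a. x - y \<in> I2)" by (simp add: reflp_def I2.zero)
  show "symp (\<lambda>x y::'a. x - y \<in> I2)" unfolding symp_def
    using I2_neg by fastforce
  show "transp (\<lambda>x y::'a. x - y \<in> I2)" unfolding transp_def
    using I2.add by fastforce
qed

instantiation r2 :: (ring_1) comm_ring
begin
lift_definition zero_r2 :: "'a r2" is 0 .
lift_definition plus_r2 :: "'a r2 \<Rightarrow> 'a r2 \<Rightarrow> 'a r2" is "(+)"
proof -
  fix x y x' y' :: 'a assume "x - y \<in> I2" "x' - y' \<in> I2"
  then have "(x - y) + (x' - y') \<in> I2" by (rule I2.add)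
  then show "x + x' - (y + y') \<in> I2" by (simp add: algebra_simps)
qed
lift_definition uminus_r2 :: "'a r2 \<Rightarrow> 'a r2" is uminus
proof -
  fix x y :: 'a assume "x - y \<in> I2"
  then have "- (x - y) \<in> I2" by (rule I2_neg)
  then show "- x - - y \<in> I2" by (simp add: algebra_simps)
qed
lift_definition minus_r2 :: "'a r2 \<Rightarrow> 'a r2 \<Rightarrow> 'a r2" is "(-)"
proof -
  fix x y x' y' :: 'a assume "x - y \<in> I2" "x' - y' \<in> I2"
  then have "(x - y) - (x' - y') \<in> I2" by (rule I2_diff)
  then show "x - x' - (y - y') \<in> I2" by (simp add: algebra_simps)
qed
lift_definition times_r2 :: "'a r2 \<Rightarrow> 'a r2 \<Rightarrow> 'a r2" is "(*)"
proof -
  fix x y x' y' :: 'a assume a: "x - y \<in> I2" "x' - y' \<in> I2"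
  have "x * (x' - y') + (x - y) * y' \<in> I2"
    using a by (intro I2.add I2.lmul I2.rmul)
  then show "x * x' - y * y' \<in> I2" by (simp add: algebra_simps)
qed
instance
proof
  fix a b c :: "'a r2"
  show "a * b * c = a * (b * c)" by transfer (simp add: I2_eq I2.zero mult.assoc)
  show "a * b = b * a" by transfer (rule I2.gen_comm)
  show "a + b + c = a + (b + c)" by transfer (simp add: I2_eq I2.zero add.assoc)
  show "a + b = b + a" by transfer (simp add: I2_eq I2.zero add.commute)
  show "0 + a = a" by transfer (simp add: I2_eq I2.zero I2.zero)
  show "- a + a = 0" by transfer (simp add: I2_eq I2.zero I2.zero)
  show "a - b = a + - b" by transfer (simp add: I2_eq I2.zero I2.zero)
  show "(a + b) * c = a * c + b * c" by transfer (simp add: I2_eq I2.zero distrib_right)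
qed
end

lemma r2_add_self[simp]: "(x::'a::ring_1 r2) + x = 0"
  by transfer (simp add: mult_2[symmetric] I2.gen_two)
lemma r2_neg[simp]: "- (x::'a::ring_1 r2) = x"
proof -
  have "- x = - x + (x + x)" by simp
  also have "\<dots> = x" by (simp only: add.assoc[symmetric] left_minus add_0)
  finally show ?thesis .
qed
lemma r2_diff: "(x::'a::ring_1 r2) - y = x + y"
  by simp
lemma abs_add: "abs_r2 (x + y) = abs_r2 x + abs_r2 y"
  by (simp add: plus_r2.abs_eq)
lemma abs_mult: "abs_r2 (x * y) = abs_r2 x * abs_r2 y"
  by (simp add: times_r2.abs_eq)
lemma abs_neg: "abs_r2 (- x) = abs_r2 x"
  using uminus_r2.abs_eq[of x] by simp
lemma abs_diff: "abs_r2 (x - y) = abs_r2 x + abs_r2 y"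
  using minus_r2.abs_eq[of x y] r2_diff[of "abs_r2 x" "abs_r2 y"] by simp
lemma abs_zero: "abs_r2 0 = 0"
  by (simp add: zero_r2_def)
lemma abs_eq0: "abs_r2 x = 0 \<longleftrightarrow> x \<in> I2"
  by (simp add: zero_r2_def r2.abs_eq_iff)
lemma abs_sum: "abs_r2 (sum f A) = (\<Sum>a\<in>A. abs_r2 (f a))"
  by (induction A rule: infinite_finite_induct) (auto simp: abs_zero abs_add)



lemma Pairs4_iff: "(i, j) \<in> Pairs4 \<longleftrightarrow> i \<in> {1..4} \<and> j \<in> {1..4} \<and> i \<noteq> j"
  by (simp add: Pairs4_def)

lemma finite_Pairs4[simp]: "finite Pairs4"
  by (rule finite_subset[of _ "{1..4} \<times> {1..4}"]) (auto simp: Pairs4_def)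

lemma P4_iff: "(i, j, k, l) \<in> P4 \<longleftrightarrow>
   i \<in> {1..4} \<and> j \<in> {1..4} \<and> k \<in> {1..4} \<and> l \<in> {1..4} \<and>
   i \<noteq> j \<and> i \<noteq> k \<and> i \<noteq> l \<and> j \<noteq> k \<and> j \<noteq> l \<and> k \<noteq> l"
proof
  assume h: "(i, j, k, l) \<in> P4"
  then have e: "{i, j, k, l} = {1, 2, 3, 4}" by (simp add: P4_def)
  then have r: "i \<in> {1..4} \<and> j \<in> {1..4} \<and> k \<in> {1..4} \<and> l \<in> {1..4}"
  proof -
    have "{i, j, k, l} \<subseteq> {1..4}" unfolding e by auto
    then show ?thesis by simp
  qed
  have c: "card {i, j, k, l} = 4" using e by simp
  have "i \<noteq> j \<and> i \<noteq> k \<and> i \<noteq> l \<and> j \<noteq> k \<and> j \<noteq> l \<and> k \<noteq> l"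
  proof (rule ccontr)
    assume "\<not> ?thesis"
    then have "\<exists>a b c. {i, j, k, l} = {a, b, c}" by blast
    then obtain a b c where "{i, j, k, l} = {a, b, c}" by blast
    moreover have "card {a, b, c} \<le> 3" by (simp add: card_insert_if)
    ultimately have "card {i, j, k, l} \<le> 3" by simp
    with c show False by simp
  qed
  with r show "i \<in> {1..4} \<and> j \<in> {1..4} \<and> k \<in> {1..4} \<and> l \<in> {1..4} \<and>
   i \<noteq> j \<and> i \<noteq> k \<and> i \<noteq> l \<and> j \<noteq> k \<and> j \<noteq> l \<and> k \<noteq> l" by blast
next
  assume h: "i \<in> {1..4} \<and> j \<in> {1..4} \<and> k \<in> {1..4} \<and> l \<in> {1..4} \<and>
   i \<noteq> j \<and> i \<noteq> k \<and> i \<noteq> l \<and> j \<noteq> k \<and> j \<noteq> l \<and> k \<noteq> l"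
  have s: "{i, j, k, l} \<subseteq> {1..4}" using h by auto
  have c: "card {i, j, k, l} = card {1..(4::nat)}" using h by simp
  have "{i, j, k, l} = {1..4}" by (rule card_subset_eq[OF _ s c]) simp
  moreover have "{1..4::nat} = {1,2,3,4}" by auto
  ultimately show "(i, j, k, l) \<in> P4" by (simp add: P4_def)
qed

lemma finite_P4[simp]: "finite P4"
  by (rule finite_subset[of _ "{1..4::nat} \<times> {1..4::nat} \<times> {1..4::nat} \<times> {1..4::nat}"]) (auto simp: P4_iff)




locale stl =
  fixes smul :: "'k::comm_ring_1 \<Rightarrow> 'l::ab_group_add \<Rightarrow> 'l"
    and br :: "'l \<Rightarrow> 'l \<Rightarrow> 'l"
    and sR :: "'k \<Rightarrow> 'r::ring_1 \<Rightarrow> 'r"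
    and X :: "nat \<Rightarrow> nat \<Rightarrow> 'r \<Rightarrow> 'l"
    and \<theta> :: "nat \<times> nat \<times> nat \<times> nat \<Rightarrow> nat"
  assumes alg: "K_algebra sR"
    and leib: "leibniz_algebra smul br"
    and rel: "stl4_relations smul br sR X"
    and dec: "stl4_decomposition smul br X"
    and th: "theta_labelling \<theta>"
begin

sublocale M: module smul
  using leib by (simp add: leibniz_algebra_def)

lemma br_addL: "br (x + y) z = br x z + br y z"
  using leib by (simp add: leibniz_algebra_def)
lemma br_addR: "br z (x + y) = br z x + br z y"
  using leib by (simp add: leibniz_algebra_def)
lemma br_smulL: "br (smul k x) y = smul k (br x y)"
  using leib by (simp add: leibniz_algebra_def)
lemma br_smulR: "br x (smul k y) = smul k (br x y)"
  using leib by (simp add: leibniz_algebra_def)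
lemma leibniz: "br (br x y) z = br x (br y z) + br (br x z) y"
  using leib by (simp add: leibniz_algebra_def)

lemma br_0L[simp]: "br 0 y = 0"
  using br_addL[of 0 0 y] by simp
lemma br_0R[simp]: "br y 0 = 0"
  using br_addR[of y 0 0] by simp
lemma br_negL[simp]: "br (- x) y = - br x y"
  using br_addL[of x "-x" y] by (metis br_0L neg_eq_iff_add_eq_0 right_minus)
lemma br_negR[simp]: "br y (- x) = - br y x"
  using br_addR[of y x "-x"] by (metis br_0R neg_eq_iff_add_eq_0 right_minus)
lemma br_diffL: "br (x - y) z = br x z - br y z"
  using br_addL[of x "-y" z] by simp
lemma br_diffR: "br z (x - y) = br z x - br z y"
  using br_addR[of z x "-y"] by simp

lemma sR_1: "sR k a = sR k 1 * a"
  using alg unfolding K_algebra_def by (metis mult_1)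

lemma relA: "\<forall>(i, j)\<in>Pairs4. \<forall>a b k. X i j (a + b) = X i j a + X i j b \<and> X i j (sR k a) = smul k (X i j a)"
  using rel unfolding stl4_relations_def by (rule conjunct1)
lemma relB: "\<forall>i\<in>{1..4}. \<forall>j\<in>{1..4}. \<forall>k\<in>{1..4}. i \<noteq> j \<and> j \<noteq> k \<and> i \<noteq> k \<longrightarrow>
        (\<forall>a b. br (X i j a) (X j k b) = X i k (a * b) \<and>
               br (X i j a) (X k i b) = - X k j (b * a))"
  using rel unfolding stl4_relations_def by (rule conjunct1[OF conjunct2])
lemma relC: "\<forall>(i, j)\<in>Pairs4. \<forall>(k, l)\<in>Pairs4. j \<noteq> k \<and> i \<noteq> l \<longrightarrow>
        (\<forall>a b. br (X i j a) (X k l b) = 0)"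
  using rel unfolding stl4_relations_def by (rule conjunct2[OF conjunct2])

lemma X_add: "(i, j) \<in> Pairs4 \<Longrightarrow> X i j (a + b) = X i j a + X i j b"
  using relA by fast
lemma X_sR: "(i, j) \<in> Pairs4 \<Longrightarrow> X i j (sR k a) = smul k (X i j a)"
  using relA by fast
lemma X_0: "(i, j) \<in> Pairs4 \<Longrightarrow> X i j 0 = 0"
  using X_add[of i j 0 0] by simp
lemma X_neg: "(i, j) \<in> Pairs4 \<Longrightarrow> X i j (- a) = - X i j a"
  using X_add[of i j a "-a"] X_0[of i j] by (metis neg_eq_iff_add_eq_0 right_minus)
lemma X_diff: "(i, j) \<in> Pairs4 \<Longrightarrow> X i j (a - b) = X i j a - X i j b"
  using X_add[of i j a "-b"] X_neg[of i j b] by simp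

lemma rel1: "i \<in> {1..4} \<Longrightarrow> j \<in> {1..4} \<Longrightarrow> k \<in> {1..4} \<Longrightarrow> i \<noteq> j \<Longrightarrow> j \<noteq> k \<Longrightarrow> i \<noteq> k
  \<Longrightarrow> br (X i j a) (X j k b) = X i k (a * b)"
  using relB by blast
lemma rel2: "i \<in> {1..4} \<Longrightarrow> j \<in> {1..4} \<Longrightarrow> k \<in> {1..4} \<Longrightarrow> i \<noteq> j \<Longrightarrow> j \<noteq> k \<Longrightarrow> i \<noteq> k
  \<Longrightarrow> br (X i j a) (X k i b) = - X k j (b * a)"
  using relB by blast
lemma rel3: "(i, j) \<in> Pairs4 \<Longrightarrow> (k, l) \<in> Pairs4 \<Longrightarrow> j \<noteq> k \<Longrightarrow> i \<noteq> l
  \<Longrightarrow> br (X i j a) (X k l b) = 0"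
  using relC by fast

definition Hgen :: "'l set" where
  "Hgen = {br (X i j a) (X j i b) | i j a b. (i, j) \<in> Pairs4}"

abbreviation Hs where "Hs \<equiv> Hspan smul br X"

lemma Hs_span: "Hs = M.span Hgen"
  by (simp add: Hspan_def Hgen_def)
lemma Hs_add: "x \<in> Hs \<Longrightarrow> y \<in> Hs \<Longrightarrow> x + y \<in> Hs"
  by (simp add: Hs_span M.span_add)
lemma Hs_diff: "x \<in> Hs \<Longrightarrow> y \<in> Hs \<Longrightarrow> x - y \<in> Hs"
  by (simp add: Hs_span M.span_diff)
lemma Hs_smul: "x \<in> Hs \<Longrightarrow> smul k x \<in> Hs"
  by (simp add: Hs_span M.span_scale)
lemma Hs_0: "0 \<in> Hs"
  by (simp add: Hs_span M.span_zero)
lemma Hs_gen: "(i, j) \<in> Pairs4 \<Longrightarrow> br (X i j a) (X j i b) \<in> Hs"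
  unfolding Hs_span by (rule M.span_base) (auto simp: Hgen_def)

lemma decA: "\<forall>x. \<exists>h\<in>Hs. \<exists>c. x = h + Xsum X c"
  using dec unfolding stl4_decomposition_def by (rule conjunct1)
lemma decB: "\<forall>h\<in>Hs. \<forall>c. h + Xsum X c = 0 \<longrightarrow>
        h = 0 \<and> (\<forall>(i, j)\<in>Pairs4. X i j (c i j) = 0)"
  using dec unfolding stl4_decomposition_def by (rule conjunct1[OF conjunct2])
lemma decC: "\<forall>(i, j)\<in>Pairs4. inj (X i j)"
  using dec unfolding stl4_decomposition_def by (rule conjunct2[OF conjunct2])
lemma dec_ex: "\<exists>h c. h \<in> Hs \<and> x = h + Xsum X c"
  using decA by blast
lemma dec_zero: "h \<in> Hs \<Longrightarrow> h + Xsum X c = 0 \<Longrightarrow> (i, j) \<in> Pairs4 \<Longrightarrow> X i j (c i j) = 0"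
  using decB by fast
lemma X_inj: "(i, j) \<in> Pairs4 \<Longrightarrow> X i j a = X i j b \<Longrightarrow> a = b"
  using decC unfolding inj_def by fast

lemma Xsum_diff: "Xsum X c - Xsum X c' = Xsum X (\<lambda>i j. c i j - c' i j)"
  unfolding Xsum_def sum_subtractf[symmetric]
  by (rule sum.cong) (auto simp: X_diff)
lemma Xsum_add: "Xsum X c + Xsum X c' = Xsum X (\<lambda>i j. c i j + c' i j)"
  unfolding Xsum_def sum.distrib[symmetric]
  by (rule sum.cong) (auto simp: X_add)
lemma Xsum_smul: "smul k (Xsum X c) = Xsum X (\<lambda>i j. sR k (c i j))"
  unfolding Xsum_def M.scale_sum_right
  by (rule sum.cong) (auto simp: X_sR)
lemma Xsum_delta: "(k, l) \<in> Pairs4 \<Longrightarrow> Xsum X (\<lambda>i j. if i = k \<and> j = l then a else 0) = X k l a"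
proof -
  assume kl: "(k, l) \<in> Pairs4"
  have "Xsum X (\<lambda>i j. if i = k \<and> j = l then a else 0) = (\<Sum>p\<in>Pairs4. if p = (k, l) then X k l a else 0)"
    unfolding Xsum_def by (rule sum.cong) (auto simp: X_0 split: if_splits)
  also have "\<dots> = X k l a" using kl by simp
  finally show ?thesis .
qed
lemma Xsum_zero: "Xsum X (\<lambda>i j. 0) = 0"
  unfolding Xsum_def by (rule sum.neutral) (auto simp: X_0)

lemma dec_uniq:
  assumes "h \<in> Hs" "h' \<in> Hs" "h + Xsum X c = h' + Xsum X c'" "(i, j) \<in> Pairs4"
  shows "c i j = c' i j"
proof -
  have "(h - h') + Xsum X (\<lambda>i j. c i j - c' i j) = 0"
    using assms(3) by (simp add: Xsum_diff[symmetric] algebra_simps)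
  then have "X i j (c i j - c' i j) = 0"
    using dec_zero[OF Hs_diff[OF assms(1,2)]] assms(4) by blast
  then have "X i j (c i j - c' i j) = X i j 0" using X_0 assms(4) by simp
  then show ?thesis using X_inj assms(4) by fastforce
qed

abbreviation cp where "cp \<equiv> comp smul br X"

lemma cp_eq: "h \<in> Hs \<Longrightarrow> (i, j) \<in> Pairs4 \<Longrightarrow> cp i j (h + Xsum X c) = c i j"
  unfolding comp_def
  apply (rule the_equality)
   apply blast
  using dec_uniq by metis

lemma cp_add: "(i, j) \<in> Pairs4 \<Longrightarrow> cp i j (x + y) = cp i j x + cp i j y"
proof -
  assume ij: "(i, j) \<in> Pairs4"
  obtain h c where h: "h \<in> Hs" "x = h + Xsum X c" using dec_ex by blast
  obtain h' c' where h': "h' \<in> Hs" "y = h' + Xsum X c'" using dec_ex by blast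
  have "x + y = (h + h') + Xsum X (\<lambda>i j. c i j + c' i j)"
    using h h' by (simp add: Xsum_add[symmetric] algebra_simps)
  then have "cp i j (x + y) = c i j + c' i j"
    using cp_eq[OF Hs_add[OF h(1) h'(1)] ij] by simp
  moreover have "cp i j x = c i j" using h cp_eq ij by simp
  moreover have "cp i j y = c' i j" using h' cp_eq ij by simp
  ultimately show ?thesis by simp
qed

lemma cp_smul: "(i, j) \<in> Pairs4 \<Longrightarrow> cp i j (smul k x) = sR k 1 * cp i j x"
proof -
  assume ij: "(i, j) \<in> Pairs4"
  obtain h c where h: "h \<in> Hs" "x = h + Xsum X c" using dec_ex by blast
  have "smul k x = smul k h + Xsum X (\<lambda>i j. sR k (c i j))"
    using h by (simp add: Xsum_smul[symmetric] M.scale_right_distrib)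
  then have "cp i j (smul k x) = sR k (c i j)"
    using cp_eq[OF Hs_smul[OF h(1)] ij] by simp
  moreover have "cp i j x = c i j" using h cp_eq ij by simp
  ultimately show ?thesis using sR_1[of k "c i j"] by simp
qed

lemma cp_H: "h \<in> Hs \<Longrightarrow> (i, j) \<in> Pairs4 \<Longrightarrow> cp i j h = 0"
  using cp_eq[of h i j "\<lambda>i j. 0"] by (simp add: Xsum_zero)

lemma cp_X: "(i, j) \<in> Pairs4 \<Longrightarrow> (k, l) \<in> Pairs4 \<Longrightarrow> cp i j (X k l a) = (if i = k \<and> j = l then a else 0)"
  using cp_eq[of 0 i j "\<lambda>i j. if i = k \<and> j = l then a else 0"] by (simp add: Xsum_delta Hs_0)


lemma cp_0: "(i, j) \<in> Pairs4 \<Longrightarrow> cp i j 0 = 0"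
  using cp_H[OF Hs_0] .

lemma P4_pairs: "(i, j, k, l) \<in> P4 \<Longrightarrow> (i, j) \<in> Pairs4 \<and> (k, l) \<in> Pairs4"
  by (simp add: P4_iff Pairs4_iff)

definition Psi :: "nat \<Rightarrow> 'l \<Rightarrow> 'l \<Rightarrow> 'r r2" where
  "Psi m x y = abs_r2 (psi_rep smul br X \<theta> m x y)"

lemma Psi_sum: "Psi m x y = (\<Sum>(i, j, k, l)\<in>{q \<in> P4. \<theta> q = m}. abs_r2 (cp i j x) * abs_r2 (cp k l y))"
  unfolding Psi_def psi_rep_def abs_sum by (rule sum.cong) (auto simp: abs_mult)

lemma Psi_addL: "Psi m (x + y) z = Psi m x z + Psi m y z"
  unfolding Psi_sum sum.distrib[symmetric]
  by (rule sum.cong) (auto simp: cp_add P4_pairs abs_add distrib_right)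
lemma Psi_addR: "Psi m z (x + y) = Psi m z x + Psi m z y"
  unfolding Psi_sum sum.distrib[symmetric]
  by (rule sum.cong) (auto simp: cp_add P4_pairs abs_add distrib_left)
lemma Psi_smulL: "Psi m (smul k x) z = abs_r2 (sR k 1) * Psi m x z"
  unfolding Psi_sum sum_distrib_left
  by (rule sum.cong) (auto simp: cp_smul P4_pairs abs_mult mult.assoc)
lemma Psi_smulR: "Psi m z (smul k x) = abs_r2 (sR k 1) * Psi m z x"
  unfolding Psi_sum sum_distrib_left
  by (rule sum.cong) (auto simp: cp_smul P4_pairs abs_mult ac_simps)
lemma Psi_HL: "h \<in> Hs \<Longrightarrow> Psi m h z = 0"
  unfolding Psi_sum
  by (rule sum.neutral) (auto simp: cp_H P4_pairs abs_zero)
lemma Psi_HR: "h \<in> Hs \<Longrightarrow> Psi m z h = 0"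
  unfolding Psi_sum
  by (rule sum.neutral) (auto simp: cp_H P4_pairs abs_zero)
lemma Psi_0L[simp]: "Psi m 0 z = 0" by (rule Psi_HL[OF Hs_0])
lemma Psi_0R[simp]: "Psi m z 0 = 0" by (rule Psi_HR[OF Hs_0])
lemma Psi_negL[simp]: "Psi m (- x) z = Psi m x z"
proof -
  have "Psi m x z + Psi m (- x) z = 0" using Psi_addL[of m x "-x" z] by simp
  then show ?thesis by (metis add_right_cancel r2_add_self)
qed
lemma Psi_negR[simp]: "Psi m z (- x) = Psi m z x"
proof -
  have "Psi m z x + Psi m z (- x) = 0" using Psi_addR[of m z x "-x"] by simp
  then show ?thesis by (metis add_right_cancel r2_add_self)
qed

lemma Psi_XX: "(i, j) \<in> Pairs4 \<Longrightarrow> (k, l) \<in> Pairs4 \<Longrightarrow>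
  Psi m (X i j a) (X k l b) = (if (i, j, k, l) \<in> P4 \<and> \<theta> (i, j, k, l) = m then abs_r2 a * abs_r2 b else 0)"
proof -
  assume ij: "(i, j) \<in> Pairs4" and kl: "(k, l) \<in> Pairs4"
  have "Psi m (X i j a) (X k l b) = (\<Sum>q\<in>{q \<in> P4. \<theta> q = m}. if q = (i, j, k, l) then abs_r2 a * abs_r2 b else 0)"
    unfolding Psi_sum
    by (rule sum.cong) (auto simp: cp_X ij kl P4_pairs abs_zero split: if_splits)
  also have "\<dots> = (if (i, j, k, l) \<in> P4 \<and> \<theta> (i, j, k, l) = m then abs_r2 a * abs_r2 b else 0)"
    by simp
  finally show ?thesis .
qed

definition Dm :: "nat \<Rightarrow> 'l \<Rightarrow> 'l \<Rightarrow> 'l \<Rightarrow> 'r r2" where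
  "Dm m x y z = Psi m x (br y z) + Psi m (br x z) y + Psi m (br x y) z"

lemma Dm_orig: "psi_rep smul br X \<theta> m x (br y z) + psi_rep smul br X \<theta> m (br x z) y
             - psi_rep smul br X \<theta> m (br x y) z \<in> I2 \<longleftrightarrow> Dm m x y z = 0"
  by (simp add: abs_eq0[symmetric] abs_add abs_diff Dm_def Psi_def)

lemma Dm_addL: "Dm m (x + x') y z = Dm m x y z + Dm m x' y z"
  by (simp add: Dm_def br_addL Psi_addL ac_simps)
lemma Dm_addM: "Dm m x (y + y') z = Dm m x y z + Dm m x y' z"
  by (simp add: Dm_def br_addL br_addR Psi_addL Psi_addR ac_simps)
lemma Dm_addR: "Dm m x y (z + z') = Dm m x y z + Dm m x y z'"
  by (simp add: Dm_def br_addL br_addR Psi_addL Psi_addR ac_simps)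
lemma Dm_smulL: "Dm m (smul k x) y z = abs_r2 (sR k 1) * Dm m x y z"
  by (simp add: Dm_def br_smulL Psi_smulL distrib_left)
lemma Dm_smulM: "Dm m x (smul k y) z = abs_r2 (sR k 1) * Dm m x y z"
  by (simp add: Dm_def br_smulL br_smulR Psi_smulL Psi_smulR distrib_left)
lemma Dm_smulR: "Dm m x y (smul k z) = abs_r2 (sR k 1) * Dm m x y z"
  by (simp add: Dm_def br_smulL br_smulR Psi_smulL Psi_smulR distrib_left)
lemma Dm_0L: "Dm m 0 y z = 0" by (simp add: Dm_def)
lemma Dm_0M: "Dm m x 0 z = 0" by (simp add: Dm_def)
lemma Dm_0R: "Dm m x y 0 = 0" by (simp add: Dm_def)

definition Xgen :: "'l set" where
  "Xgen = {X i j a | i j a. (i, j) \<in> Pairs4}"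
definition G :: "'l set" where "G = Hgen \<union> Xgen"

lemma span_G: "x \<in> M.span G"
proof -
  obtain h c where h: "h \<in> Hs" "x = h + Xsum X c" using dec_ex by blast
  have "h \<in> M.span G" using h(1) unfolding Hs_span G_def
    using M.span_mono[of Hgen "Hgen \<union> Xgen"] by blast
  moreover have "Xsum X c \<in> M.span G"
    unfolding Xsum_def
    by (rule M.span_sum) (auto intro!: M.span_base simp: G_def Xgen_def)
  ultimately show ?thesis using h(2) M.span_add by simp
qed

lemma ind1: assumes "\<And>g. g \<in> G \<Longrightarrow> Dm m g y z = 0" shows "Dm m x y z = 0"
  using span_G[of x]
proof (induction rule: M.span_induct)
  case step then show ?case using assms by blast
next
  case base show ?case
    by (rule M.subspaceI) (auto simp: Dm_0L Dm_addL Dm_smulL)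
qed
lemma ind2: assumes "\<And>g. g \<in> G \<Longrightarrow> Dm m x g z = 0" shows "Dm m x y z = 0"
  using span_G[of y]
proof (induction rule: M.span_induct)
  case step then show ?case using assms by blast
next
  case base show ?case
    by (rule M.subspaceI) (auto simp: Dm_0M Dm_addM Dm_smulM)
qed
lemma ind3: assumes "\<And>g. g \<in> G \<Longrightarrow> Dm m x y g = 0" shows "Dm m x y z = 0"
  using span_G[of z]
proof (induction rule: M.span_induct)
  case step then show ?case using assms by blast
next
  case base show ?case
    by (rule M.subspaceI) (auto simp: Dm_0R Dm_addR Dm_smulR)
qed

lemma all_good:
  assumes "\<And>g1 g2 g3. g1 \<in> G \<Longrightarrow> g2 \<in> G \<Longrightarrow> g3 \<in> G \<Longrightarrow> Dm m g1 g2 g3 = 0"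
  shows "Dm m x y z = 0"
  apply (rule ind1) apply (rule ind2) apply (rule ind3) using assms by blast

end



lemma theta_G: "theta_labelling \<theta> \<Longrightarrow> q \<in> P4 \<Longrightarrow> q' \<in> Gclass q \<Longrightarrow> \<theta> q' = \<theta> q"
proof -
  assume th: "theta_labelling \<theta>" and q: "q \<in> P4" and q': "q' \<in> Gclass q"
  obtain i j k l where qq: "q = (i, j, k, l)" by (cases q) auto
  have "q' \<in> P4" using q q' unfolding qq by (auto simp: P4_iff)
  then show ?thesis using th q q' unfolding theta_labelling_def by metis
qed

lemma theta_swap13: "theta_labelling \<theta> \<Longrightarrow> (i, j, k, l) \<in> P4 \<Longrightarrow> \<theta> (k, j, i, l) = \<theta> (i, j, k, l)"
  by (rule theta_G) auto
lemma theta_swap24: "theta_labelling \<theta> \<Longrightarrow> (i, j, k, l) \<in> P4 \<Longrightarrow> \<theta> (i, l, k, j) = \<theta> (i, j, k, l)"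
  by (rule theta_G) auto

lemma four: "(x::nat) \<in> {1..4} \<longleftrightarrow> x = 1 \<or> x = 2 \<or> x = 3 \<or> x = 4"
  by auto

lemma PH: "(a, b, c, d) \<in> P4 \<Longrightarrow> x \<in> {1..4} \<Longrightarrow> x \<noteq> a \<Longrightarrow> x \<noteq> b \<Longrightarrow> x \<noteq> c \<Longrightarrow> x \<noteq> d \<Longrightarrow> False"
proof -
  assume h: "(a, b, c, d) \<in> P4" "x \<in> {1..4}" "x \<noteq> a" "x \<noteq> b" "x \<noteq> c" "x \<noteq> d"
  have "x \<in> {1, 2, 3, 4}" using h(2) by auto
  also have "{1, 2, 3, 4} = {a, b, c, d}" using h(1) by (simp add: P4_def)
  finally show False using h by simp
qed

lemma pair0: "P \<longleftrightarrow> Q \<Longrightarrow> (if P then t else 0) + (if Q then t else 0) = (0::'a::ring_1 r2)"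
  by simp

lemma comb:
  fixes t :: "'a::ring_1 r2" and \<theta> :: "nat \<times> nat \<times> nat \<times> nat \<Rightarrow> nat"
  assumes th: "theta_labelling \<theta>"
    and r: "i \<in> {1..4}" "j \<in> {1..4}" "k \<in> {1..4}" "l \<in> {1..4}" "p \<in> {1..4}" "q \<in> {1..4}"
    and d: "i \<noteq> j" "k \<noteq> l" "p \<noteq> q"
    and A: "A \<longleftrightarrow> l = p \<and> k \<noteq> q \<and> (i, j, k, q) \<in> P4 \<and> \<theta> (i, j, k, q) = m"
    and B: "B \<longleftrightarrow> k = q \<and> l \<noteq> p \<and> (i, j, p, l) \<in> P4 \<and> \<theta> (i, j, p, l) = m"
    and C: "C \<longleftrightarrow> j = p \<and> i \<noteq> q \<and> (i, q, k, l) \<in> P4 \<and> \<theta> (i, q, k, l) = m"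
    and D: "D \<longleftrightarrow> i = q \<and> j \<noteq> p \<and> (p, j, k, l) \<in> P4 \<and> \<theta> (p, j, k, l) = m"
    and E: "E \<longleftrightarrow> j = k \<and> i \<noteq> l \<and> (i, l, p, q) \<in> P4 \<and> \<theta> (i, l, p, q) = m"
    and F: "F \<longleftrightarrow> i = l \<and> j \<noteq> k \<and> (k, j, p, q) \<in> P4 \<and> \<theta> (k, j, p, q) = m"
  shows "(if A then t else 0) + (if B then t else 0) + (if C then t else 0)
       + (if D then t else 0) + (if E then t else 0) + (if F then t else 0) = 0"
proof (cases "l = p")
  case lp: True
  show ?thesis
  proof (cases "k = q")
    case kq: True
    have "\<not>A" using lp kq A by (auto simp: P4_iff)
    moreover have "\<not>B" using lp kq B by (auto simp: P4_iff)
    moreover have "\<not>C" using lp kq C by (auto simp: P4_iff)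
    moreover have "\<not>D" using lp kq D by (auto simp: P4_iff)
    moreover have "\<not>E" using lp kq E by (auto simp: P4_iff)
    moreover have "\<not>F" using lp kq F by (auto simp: P4_iff)
    ultimately show ?thesis by simp
  next
    case kq: False
    show ?thesis
    proof (cases "i = l")
      case il: True
      have "\<not>B" using lp kq il d B by (auto simp: P4_iff)
      moreover have "\<not>C" using lp kq il d C by (auto simp: P4_iff)
      moreover have "\<not>D" using lp kq il d D by (auto simp: P4_iff)
      moreover have "\<not>E" using lp kq il d E by (auto simp: P4_iff)
      moreover have "A \<longleftrightarrow> F" using lp kq il A F theta_swap13[OF th, of i j k q] by (auto simp: P4_iff)
      ultimately show ?thesis by simp
    next
      case il: False
      show ?thesis
      proof (cases "j = l")
        case jl: True
        have "\<not>B" using lp kq il jl d B by (auto simp: P4_iff)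
        moreover have "\<not>D" using lp kq il jl d D by (auto simp: P4_iff)
        moreover have "\<not>E" using lp kq il jl d E by (auto simp: P4_iff)
        moreover have "\<not>F" using lp kq il jl d F by (auto simp: P4_iff)
        moreover have "A \<longleftrightarrow> C" using lp kq jl A C theta_swap24[OF th, of i j k q] by (auto simp: P4_iff)
        ultimately show ?thesis by simp
      next
        case jl: False
        have "\<not>A" using lp kq il jl d A r PH[of i j k q l] by auto
        moreover have "\<not>B" using lp kq il jl d B by (auto simp: P4_iff)
        moreover have "\<not>C" using lp kq il jl d C by (auto simp: P4_iff)
        moreover have "\<not>D" using lp kq il jl d D by (auto simp: P4_iff)
        moreover have "\<not>E" using lp kq il jl d E by (auto simp: P4_iff)
        moreover have "\<not>F" using lp kq il jl d F by (auto simp: P4_iff)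
        ultimately show ?thesis by simp
      qed
    qed
  qed
next
  case lp: False
  show ?thesis
  proof (cases "k = q")
    case kq: True
    show ?thesis
    proof (cases "k = i")
      case ki: True
      have "\<not>A" using lp kq ki d A by (auto simp: P4_iff)
      moreover have "\<not>C" using lp kq ki d C by (auto simp: P4_iff)
      moreover have "\<not>E" using lp kq ki d E by (auto simp: P4_iff)
      moreover have "\<not>F" using lp kq ki d F by (auto simp: P4_iff)
      moreover have "B \<longleftrightarrow> D" using lp kq ki B D theta_swap13[OF th, of i j p l] by (auto simp: P4_iff)
      ultimately show ?thesis by simp
    next
      case ki: False
      show ?thesis
      proof (cases "k = j")
        case kj: True
        have "\<not>A" using lp kq ki kj d A by (auto simp: P4_iff)
        moreover have "\<not>C" using lp kq ki kj d C by (auto simp: P4_iff)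
        moreover have "\<not>D" using lp kq ki kj d D by (auto simp: P4_iff)
        moreover have "\<not>F" using lp kq ki kj d F by (auto simp: P4_iff)
        moreover have "B \<longleftrightarrow> E" using lp kq kj B E theta_swap24[OF th, of i j p l] by (auto simp: P4_iff)
        ultimately show ?thesis by simp
      next
        case kj: False
        have "\<not>B" using lp kq ki kj d B r PH[of i j p l k] by auto
        moreover have "\<not>A" using lp kq ki kj d A by (auto simp: P4_iff)
        moreover have "\<not>C" using lp kq ki kj d C by (auto simp: P4_iff)
        moreover have "\<not>D" using lp kq ki kj d D by (auto simp: P4_iff)
        moreover have "\<not>E" using lp kq ki kj d E by (auto simp: P4_iff)
        moreover have "\<not>F" using lp kq ki kj d F by (auto simp: P4_iff)
        ultimately show ?thesis by simp
      qed
    qed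
  next
    case kq: False
    have nAB: "\<not>A" "\<not>B" using lp kq A B by auto
    show ?thesis
    proof (cases "j = p")
      case jp: True
      show ?thesis
      proof (cases "j = k")
        case jk: True
        have "\<not>D" "\<not>F" using jp jk D F by auto
        moreover have "C \<longleftrightarrow> E" using jp jk C E theta_swap24[OF th, of i q j l] by (auto simp: P4_iff)
        ultimately show ?thesis using nAB by simp
      next
        case jk: False
        have "\<not>C" using jp jk lp d C r PH[of i q k l j] by auto
        moreover have "\<not>D" using jp jk d D by (auto simp: P4_iff)
        moreover have "\<not>E" using jp jk d E by (auto simp: P4_iff)
        moreover have "\<not>F" using jp jk d F by (auto simp: P4_iff)
        ultimately show ?thesis using nAB by simp
      qed
    next
      case jp: False
      show ?thesis
      proof (cases "i = q")
        case iq: True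
        show ?thesis
        proof (cases "i = l")
          case il: True
          have "\<not>C" "\<not>E" using jp il C E by auto
          moreover have "D \<longleftrightarrow> F" using jp iq il D F theta_swap13[OF th, of p j k i] by (auto simp: P4_iff)
          ultimately show ?thesis using nAB by simp
        next
          case il: False
          have "\<not>D" using iq il jp kq d D r PH[of p j k l i] by auto
          moreover have "\<not>C" using jp iq il C by (auto simp: P4_iff)
          moreover have "\<not>E" using jp iq il E by (auto simp: P4_iff)
          moreover have "\<not>F" using jp iq il F by (auto simp: P4_iff)
          ultimately show ?thesis using nAB by simp
        qed
      next
        case iq: False
        have "\<not>E" using iq jp kq d E r PH[of i l p q j] by auto
        moreover have "\<not>F" using iq jp lp d F r PH[of k j p q i] by auto
        moreover have "\<not>C" "\<not>D" using jp iq C D by auto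
        ultimately show ?thesis using nAB by simp
      qed
    qed
  qed
qed




definition wt :: "nat \<Rightarrow> nat \<Rightarrow> 'r::ring_1 \<Rightarrow> 'r \<Rightarrow> nat \<Rightarrow> 'r r2" where
  "wt i j a b t = (if t = i \<or> t = j then abs_r2 a * abs_r2 b else 0)"

lemma third: "\<exists>t\<in>{1..4::nat}. t \<noteq> i \<and> t \<noteq> j"
  by (rule bexI[of _ "if i \<noteq> 1 \<and> j \<noteq> 1 then 1 else if i \<noteq> 2 \<and> j \<noteq> 2 then 2 else 3"]) auto

context stl
begin

lemma la_ki: assumes "i \<in> {1..4}" "j \<in> {1..4}" "l \<in> {1..4}" "i \<noteq> j" "l \<noteq> i" "l \<noteq> j"
  shows "br (br (X i j a) (X j i b)) (X i l c) = X i l (a * (b * c))"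
  using assms by (simp add: leibniz rel1 rel3 Pairs4_iff)

lemma la_kj: assumes "i \<in> {1..4}" "j \<in> {1..4}" "l \<in> {1..4}" "i \<noteq> j" "l \<noteq> i" "l \<noteq> j"
  shows "br (br (X i j a) (X j i b)) (X j l c) = X j l (- (b * (a * c)))"
  using assms by (simp add: leibniz rel1 rel2 rel3 Pairs4_iff X_neg)

lemma la_li: assumes "i \<in> {1..4}" "j \<in> {1..4}" "k \<in> {1..4}" "i \<noteq> j" "k \<noteq> i" "k \<noteq> j"
  shows "br (br (X i j a) (X j i b)) (X k i c) = X k i (- (c * a * b))"
  using assms by (simp add: leibniz rel1 rel2 rel3 Pairs4_iff X_neg)

lemma la_lj: assumes "i \<in> {1..4}" "j \<in> {1..4}" "k \<in> {1..4}" "i \<noteq> j" "k \<noteq> i" "k \<noteq> j"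
  shows "br (br (X i j a) (X j i b)) (X k j c) = X k j (c * b * a)"
  using assms by (simp add: leibniz rel1 rel2 rel3 Pairs4_iff X_neg)

lemma la_disj: assumes "(i, j) \<in> Pairs4" "(k, l) \<in> Pairs4" "k \<noteq> i" "k \<noteq> j" "l \<noteq> i" "l \<noteq> j"
  shows "br (br (X i j a) (X j i b)) (X k l c) = X k l 0"
  using assms by (simp add: leibniz rel3 Pairs4_iff X_0)


lemma la_same: assumes "(i, j) \<in> Pairs4"
  shows "\<exists>e. br (br (X i j a) (X j i b)) (X i j c) = X i j e \<and> abs_r2 e = 0"
proof -
  have r: "i \<in> {1..4}" "j \<in> {1..4}" "i \<noteq> j" using assms by (auto simp: Pairs4_iff)
  obtain t where t: "t \<in> {1..4}" "t \<noteq> i" "t \<noteq> j" using third by blast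
  let ?h = "br (X i j a) (X j i b)"
  have x: "X i j c = br (X i t c) (X t j 1)" using r t by (simp add: rel1)
  have "br ?h (X i j c) = br (br ?h (X i t c)) (X t j 1) - br (br ?h (X t j 1)) (X i t c)"
    unfolding x using leib by (simp add: leibniz_algebra_def)
  also have "\<dots> = X i j (a * (b * c) * 1 + c * (1 * b * a))"
    using r t by (simp add: la_ki la_lj rel1 rel2 X_add Pairs4_iff)
  finally show ?thesis by (intro exI[of _ "a * (b * c) * 1 + c * (1 * b * a)"]) (simp add: abs_add abs_mult ac_simps)
qed

lemma la_swap: assumes "(i, j) \<in> Pairs4"
  shows "\<exists>e. br (br (X i j a) (X j i b)) (X j i c) = X j i e \<and> abs_r2 e = 0"
proof -
  have r: "i \<in> {1..4}" "j \<in> {1..4}" "i \<noteq> j" using assms by (auto simp: Pairs4_iff)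
  obtain t where t: "t \<in> {1..4}" "t \<noteq> i" "t \<noteq> j" using third by blast
  let ?h = "br (X i j a) (X j i b)"
  have x: "X j i c = br (X j t c) (X t i 1)" using r t by (simp add: rel1)
  have "br ?h (X j i c) = br (br ?h (X j t c)) (X t i 1) - br (br ?h (X t i 1)) (X j t c)"
    unfolding x using leib by (simp add: leibniz_algebra_def)
  also have "\<dots> = X j i (- (b * (a * c)) * 1 + c * (- (1 * a * b)))"
    using r t by (simp add: la_kj la_li rel1 rel2 X_add X_diff X_neg Pairs4_iff)
  finally show ?thesis by (intro exI[of _ "- (b * (a * c)) * 1 + c * (- (1 * a * b))"]) (simp add: abs_add abs_diff abs_mult abs_neg ac_simps)
qed


lemma wt_simp: "wt i j a b t = (if t = i \<or> t = j then abs_r2 a * abs_r2 b else 0)"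
  by (simp add: wt_def)

lemma LA: assumes ij: "(i, j) \<in> Pairs4" and kl: "(k, l) \<in> Pairs4"
  shows "\<exists>e. br (br (X i j a) (X j i b)) (X k l c) = X k l e \<and>
     abs_r2 e = (wt i j a b k + wt i j a b l) * abs_r2 c"
proof -
  have r: "i \<in> {1..4}" "j \<in> {1..4}" "i \<noteq> j" "k \<in> {1..4}" "l \<in> {1..4}" "k \<noteq> l"
    using ij kl by (auto simp: Pairs4_iff)
  show ?thesis
  proof (cases "k = i \<and> l = j")
    case True then show ?thesis using la_same[OF ij, of a b c] r by (auto simp: wt_simp)
  next
    case n1: False
    show ?thesis
    proof (cases "k = j \<and> l = i")
      case True then show ?thesis using la_swap[OF ij, of a b c] r by (auto simp: wt_simp)
    next
      case n2: False
      show ?thesis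
      proof (cases "k = i")
        case True then show ?thesis using la_ki[of i j l a b c] r n1
          by (intro exI[of _ "a * (b * c)"]) (auto simp: wt_simp abs_mult ac_simps)
      next
        case n3: False
        show ?thesis
        proof (cases "k = j")
          case True then show ?thesis using la_kj[of i j l a b c] r n2
            by (intro exI[of _ "- (b * (a * c))"]) (auto simp: wt_simp abs_mult abs_neg ac_simps)
        next
          case n4: False
          show ?thesis
          proof (cases "l = i")
            case True then show ?thesis using la_li[of i j k a b c] r n3 n4
              by (intro exI[of _ "- (c * a * b)"]) (auto simp: wt_simp abs_mult abs_neg ac_simps)
          next
            case n5: False
            show ?thesis
            proof (cases "l = j")
              case True then show ?thesis using la_lj[of i j k a b c] r n3 n4
                by (intro exI[of _ "c * b * a"]) (auto simp: wt_simp abs_mult ac_simps)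
            next
              case n6: False
              then show ?thesis using la_disj[OF ij kl, of a b c] n3 n4 n5
                by (intro exI[of _ 0]) (auto simp: wt_simp abs_zero)
            qed
          qed
        qed
      qed
    qed
  qed
qed

lemma leib0: "br x (br y z) = br (br x y) z - br (br x z) y"
  using leib by (simp add: leibniz_algebra_def)

lemma ra_ki: assumes "i \<in> {1..4}" "j \<in> {1..4}" "l \<in> {1..4}" "i \<noteq> j" "l \<noteq> i" "l \<noteq> j"
  shows "br (X i l c) (br (X i j a) (X j i b)) = X i l (- (a * (b * c)))"
  using assms by (simp add: leib0 rel1 rel2 rel3 Pairs4_iff X_neg)

lemma ra_kj: assumes "i \<in> {1..4}" "j \<in> {1..4}" "l \<in> {1..4}" "i \<noteq> j" "l \<noteq> i" "l \<noteq> j"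
  shows "br (X j l c) (br (X i j a) (X j i b)) = X j l (b * (a * c))"
  using assms by (simp add: leib0 rel1 rel2 rel3 Pairs4_iff X_neg)

lemma ra_li: assumes "i \<in> {1..4}" "j \<in> {1..4}" "k \<in> {1..4}" "i \<noteq> j" "k \<noteq> i" "k \<noteq> j"
  shows "br (X k i c) (br (X i j a) (X j i b)) = X k i (c * a * b)"
  using assms by (simp add: leib0 rel1 rel2 rel3 Pairs4_iff X_neg)

lemma ra_lj: assumes "i \<in> {1..4}" "j \<in> {1..4}" "k \<in> {1..4}" "i \<noteq> j" "k \<noteq> i" "k \<noteq> j"
  shows "br (X k j c) (br (X i j a) (X j i b)) = X k j (- (c * b * a))"
  using assms by (simp add: leib0 rel1 rel2 rel3 Pairs4_iff X_neg)

lemma ra_disj: assumes "(i, j) \<in> Pairs4" "(k, l) \<in> Pairs4" "k \<noteq> i" "k \<noteq> j" "l \<noteq> i" "l \<noteq> j"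
  shows "br (X k l c) (br (X i j a) (X j i b)) = X k l 0"
  using assms by (simp add: leib0 rel3 Pairs4_iff X_0)

lemma ra_same: assumes ij: "(i, j) \<in> Pairs4"
  shows "\<exists>e. br (X i j c) (br (X i j a) (X j i b)) = X i j e \<and> abs_r2 e = 0"
proof -
  have r: "i \<in> {1..4}" "j \<in> {1..4}" "i \<noteq> j" using ij by (auto simp: Pairs4_iff)
  obtain e where e: "br (br (X i j c) (X j i b)) (X i j a) = X i j e" "abs_r2 e = 0"
    using la_same[OF ij] by blast
  have "br (X i j c) (br (X i j a) (X j i b)) = - X i j e"
    using r e by (simp add: leib0 rel3 Pairs4_iff)
  then show ?thesis using e ij by (intro exI[of _ "- e"]) (simp add: X_neg abs_neg)
qed

lemma ra_swap: assumes ij: "(i, j) \<in> Pairs4"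
  shows "\<exists>e. br (X j i c) (br (X i j a) (X j i b)) = X j i e \<and> abs_r2 e = 0"
proof -
  have r: "i \<in> {1..4}" "j \<in> {1..4}" "i \<noteq> j" using ij by (auto simp: Pairs4_iff)
  have ji: "(j, i) \<in> Pairs4" using r by (simp add: Pairs4_iff)
  obtain e where e: "br (br (X j i c) (X i j a)) (X j i b) = X j i e" "abs_r2 e = 0"
    using la_same[OF ji] by blast
  have "br (X j i c) (br (X i j a) (X j i b)) = X j i e"
    using r e by (simp add: leib0 rel3 Pairs4_iff)
  then show ?thesis using e by blast
qed

lemma RA: assumes ij: "(i, j) \<in> Pairs4" and kl: "(k, l) \<in> Pairs4"
  shows "\<exists>e. br (X k l c) (br (X i j a) (X j i b)) = X k l e \<and>
     abs_r2 e = (wt i j a b k + wt i j a b l) * abs_r2 c"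
proof -
  have r: "i \<in> {1..4}" "j \<in> {1..4}" "i \<noteq> j" "k \<in> {1..4}" "l \<in> {1..4}" "k \<noteq> l"
    using ij kl by (auto simp: Pairs4_iff)
  show ?thesis
  proof (cases "k = i \<and> l = j")
    case True then show ?thesis using ra_same[OF ij, of c a b] r by (auto simp: wt_simp)
  next
    case n1: False
    show ?thesis
    proof (cases "k = j \<and> l = i")
      case True then show ?thesis using ra_swap[OF ij, of c a b] r by (auto simp: wt_simp)
    next
      case n2: False
      show ?thesis
      proof (cases "k = i")
        case True then show ?thesis using ra_ki[of i j l c a b] r n1
          by (intro exI[of _ "- (a * (b * c))"]) (auto simp: wt_simp abs_mult abs_neg ac_simps)
      next
        case n3: False
        show ?thesis
        proof (cases "k = j")
          case True then show ?thesis using ra_kj[of i j l c a b] r n2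
            by (intro exI[of _ "b * (a * c)"]) (auto simp: wt_simp abs_mult ac_simps)
        next
          case n4: False
          show ?thesis
          proof (cases "l = i")
            case True then show ?thesis using ra_li[of i j k c a b] r n3 n4
              by (intro exI[of _ "c * a * b"]) (auto simp: wt_simp abs_mult ac_simps)
          next
            case n5: False
            show ?thesis
            proof (cases "l = j")
              case True then show ?thesis using ra_lj[of i j k c a b] r n3 n4
                by (intro exI[of _ "- (c * b * a)"]) (auto simp: wt_simp abs_mult abs_neg ac_simps)
            next
              case n6: False
              then show ?thesis using ra_disj[OF ij kl, of c a b] n3 n4 n5
                by (intro exI[of _ 0]) (auto simp: wt_simp abs_zero)
            qed
          qed
        qed
      qed
    qed
  qed
qed


lemma wsum: assumes ij: "(i, j) \<in> Pairs4" and q: "(k, l, p, q) \<in> P4"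
  shows "wt i j a b k + wt i j a b l + wt i j a b p + wt i j a b q = 0"
proof -
  have r: "i \<in> {1..4}" "j \<in> {1..4}" "i \<noteq> j" using ij by (auto simp: Pairs4_iff)
  have "i = k \<or> i = l \<or> i = p \<or> i = q" using PH[OF q r(1)] by blast
  moreover have "j = k \<or> j = l \<or> j = p \<or> j = q" using PH[OF q r(2)] by blast
  ultimately show ?thesis using q r(3) by (auto simp: wt_simp P4_iff)
qed

lemma theta_pp: "(k, l, p, q) \<in> P4 \<Longrightarrow> \<theta> (p, q, k, l) = \<theta> (k, l, p, q)"
  by (rule theta_G[OF th]) auto

lemma P4_pp: "(p, q, k, l) \<in> P4 \<longleftrightarrow> (k, l, p, q) \<in> P4"
  by (auto simp: P4_iff)

lemma HH: assumes ij: "(i, j) \<in> Pairs4" and kl: "(k, l) \<in> Pairs4"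
  shows "br (br (X i j a) (X j i b)) (br (X k l c) (X l k d)) \<in> Hs"
proof -
  have lk: "(l, k) \<in> Pairs4" using kl by (auto simp: Pairs4_iff)
  obtain e1 where e1: "br (br (X i j a) (X j i b)) (X k l c) = X k l e1" using LA[OF ij kl] by blast
  obtain e2 where e2: "br (br (X i j a) (X j i b)) (X l k d) = X l k e2" using LA[OF ij lk] by blast
  show ?thesis unfolding leib0 e1 e2 by (intro Hs_diff Hs_gen kl lk)
qed

lemma br_XX: assumes kl: "(k, l) \<in> Pairs4" and pq: "(p, q) \<in> Pairs4"
  shows "\<exists>h\<in>Hs. br (X k l b) (X p q c) = h + (if l = p \<and> k \<noteq> q then X k q (b * c) else 0)
     + (if k = q \<and> l \<noteq> p then X p l (- (c * b)) else 0)"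
proof -
  have r: "k \<in> {1..4}" "l \<in> {1..4}" "k \<noteq> l" "p \<in> {1..4}" "q \<in> {1..4}" "p \<noteq> q"
    using kl pq by (auto simp: Pairs4_iff)
  show ?thesis
  proof (cases "l = p")
    case lp: True
    show ?thesis
    proof (cases "k = q")
      case True
      then show ?thesis using lp kl Hs_gen[OF kl, of b c] by auto
    next
      case False
      then show ?thesis using lp r Hs_0 by (auto simp: rel1)
    qed
  next
    case lp: False
    show ?thesis
    proof (cases "k = q")
      case True
      then show ?thesis using lp r Hs_0 by (auto simp: rel2 X_neg Pairs4_iff)
    next
      case False
      then show ?thesis using lp kl pq Hs_0 by (auto simp: rel3)
    qed
  qed
qed

lemma Psi_if: "Psi m x (if P then u else 0) = (if P then Psi m x u else 0)"
  by simp
lemma Psi_ifL: "Psi m (if P then u else 0) x = (if P then Psi m u x else 0)"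
  by simp

lemma Psi_X_brXX: assumes ij: "(i, j) \<in> Pairs4" and kl: "(k, l) \<in> Pairs4" and pq: "(p, q) \<in> Pairs4"
  shows "Psi m (X i j a) (br (X k l b) (X p q c)) =
     (if l = p \<and> k \<noteq> q \<and> (i, j, k, q) \<in> P4 \<and> \<theta> (i, j, k, q) = m then abs_r2 a * abs_r2 b * abs_r2 c else 0)
   + (if k = q \<and> l \<noteq> p \<and> (i, j, p, l) \<in> P4 \<and> \<theta> (i, j, p, l) = m then abs_r2 a * abs_r2 b * abs_r2 c else 0)"
proof -
  have r: "k \<in> {1..4}" "l \<in> {1..4}" "k \<noteq> l" "p \<in> {1..4}" "q \<in> {1..4}" "p \<noteq> q"
    using kl pq by (auto simp: Pairs4_iff)
  obtain h where h: "h \<in> Hs" "br (X k l b) (X p q c) = h + (if l = p \<and> k \<noteq> q then X k q (b * c) else 0)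
     + (if k = q \<and> l \<noteq> p then X p l (- (c * b)) else 0)" using br_XX[OF kl pq] by blast
  show ?thesis
    unfolding h(2) Psi_addR Psi_HR[OF h(1)] Psi_if
    using r ij by (auto simp: Psi_XX Pairs4_iff abs_mult abs_neg ac_simps)
qed

lemma Psi_brXX_X: assumes ij: "(i, j) \<in> Pairs4" and kl: "(k, l) \<in> Pairs4" and pq: "(p, q) \<in> Pairs4"
  shows "Psi m (br (X i j a) (X k l b)) (X p q c) =
     (if j = k \<and> i \<noteq> l \<and> (i, l, p, q) \<in> P4 \<and> \<theta> (i, l, p, q) = m then abs_r2 a * abs_r2 b * abs_r2 c else 0)
   + (if i = l \<and> j \<noteq> k \<and> (k, j, p, q) \<in> P4 \<and> \<theta> (k, j, p, q) = m then abs_r2 a * abs_r2 b * abs_r2 c else 0)"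
proof -
  have r: "i \<in> {1..4}" "j \<in> {1..4}" "i \<noteq> j" "k \<in> {1..4}" "l \<in> {1..4}" "k \<noteq> l"
    using ij kl by (auto simp: Pairs4_iff)
  obtain h where h: "h \<in> Hs" "br (X i j a) (X k l b) = h + (if j = k \<and> i \<noteq> l then X i l (a * b) else 0)
     + (if i = l \<and> j \<noteq> k then X k j (- (b * a)) else 0)" using br_XX[OF ij kl] by blast
  show ?thesis
    unfolding h(2) Psi_addL Psi_HL[OF h(1)] Psi_ifL
    using r pq by (auto simp: Psi_XX Pairs4_iff abs_mult abs_neg ac_simps)
qed


lemma Dm_XXX: assumes ij: "(i, j) \<in> Pairs4" and kl: "(k, l) \<in> Pairs4" and pq: "(p, q) \<in> Pairs4"
  shows "Dm m (X i j a) (X k l b) (X p q c) = 0"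
proof -
  have r: "i \<in> {1..4}" "j \<in> {1..4}" "k \<in> {1..4}" "l \<in> {1..4}" "p \<in> {1..4}" "q \<in> {1..4}"
    and d: "i \<noteq> j" "k \<noteq> l" "p \<noteq> q"
    using ij kl pq by (auto simp: Pairs4_iff)
  have cm: "abs_r2 a * abs_r2 c * abs_r2 b = abs_r2 a * abs_r2 b * abs_r2 c" by (simp add: ac_simps)
  note cb = comb[OF th r d refl refl refl refl refl refl, of m "abs_r2 a * abs_r2 b * abs_r2 c"]
  show ?thesis
    unfolding Dm_def Psi_X_brXX[OF ij kl pq] Psi_brXX_X[OF ij pq kl] Psi_brXX_X[OF ij kl pq] cm
    using cb by (simp only: add.assoc)
qed

lemma Dm_HXX: assumes ij: "(i, j) \<in> Pairs4" and kl: "(k, l) \<in> Pairs4" and pq: "(p, q) \<in> Pairs4"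
  shows "Dm m (br (X i j a) (X j i b)) (X k l c) (X p q d) = 0"
proof -
  obtain e1 where e1: "br (br (X i j a) (X j i b)) (X k l c) = X k l e1"
    "abs_r2 e1 = (wt i j a b k + wt i j a b l) * abs_r2 c" using LA[OF ij kl] by blast
  obtain e2 where e2: "br (br (X i j a) (X j i b)) (X p q d) = X p q e2"
    "abs_r2 e2 = (wt i j a b p + wt i j a b q) * abs_r2 d" using LA[OF ij pq] by blast
  have "Dm m (br (X i j a) (X j i b)) (X k l c) (X p q d) =
    Psi m (X p q e2) (X k l c) + Psi m (X k l e1) (X p q d)"
    unfolding Dm_def e1(1) e2(1) Psi_HL[OF Hs_gen[OF ij]] by simp
  also have "\<dots> = 0"
  proof (cases "(k, l, p, q) \<in> P4")
    case True
    have w: "(wt i j a b k + wt i j a b l + wt i j a b p + wt i j a b q) * (abs_r2 c * abs_r2 d) = 0"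
      unfolding wsum[OF ij True, of a b] by simp
    have "abs_r2 e2 * abs_r2 c + abs_r2 e1 * abs_r2 d =
      (wt i j a b k + wt i j a b l + wt i j a b p + wt i j a b q) * (abs_r2 c * abs_r2 d)"
      unfolding e1(2) e2(2) by (simp add: algebra_simps)
    then show ?thesis using True w
      by (simp add: Psi_XX kl pq theta_pp P4_pp)
  next
    case False
    then show ?thesis by (simp add: Psi_XX kl pq P4_pp)
  qed
  finally show ?thesis .
qed

lemma Dm_XHX: assumes ij: "(i, j) \<in> Pairs4" and kl: "(k, l) \<in> Pairs4" and pq: "(p, q) \<in> Pairs4"
  shows "Dm m (X i j a) (br (X k l c) (X l k d)) (X p q e) = 0"
proof -
  obtain e2 where e2: "br (br (X k l c) (X l k d)) (X p q e) = X p q e2"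
    "abs_r2 e2 = (wt k l c d p + wt k l c d q) * abs_r2 e" using LA[OF kl pq] by blast
  obtain e1 where e1: "br (X i j a) (br (X k l c) (X l k d)) = X i j e1"
    "abs_r2 e1 = (wt k l c d i + wt k l c d j) * abs_r2 a" using RA[OF kl ij] by blast
  have "Dm m (X i j a) (br (X k l c) (X l k d)) (X p q e) =
    Psi m (X i j a) (X p q e2) + Psi m (X i j e1) (X p q e)"
    unfolding Dm_def e1(1) e2(1) Psi_HR[OF Hs_gen[OF kl]] by simp
  also have "\<dots> = 0"
  proof (cases "(i, j, p, q) \<in> P4")
    case True
    have w: "(wt k l c d i + wt k l c d j + wt k l c d p + wt k l c d q) * (abs_r2 a * abs_r2 e) = 0"
      unfolding wsum[OF kl True, of c d] by simp
    have "abs_r2 a * abs_r2 e2 + abs_r2 e1 * abs_r2 e =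
      (wt k l c d i + wt k l c d j + wt k l c d p + wt k l c d q) * (abs_r2 a * abs_r2 e)"
      unfolding e1(2) e2(2) by (simp add: algebra_simps)
    then show ?thesis using True w
      by (simp add: Psi_XX ij pq)
  next
    case False
    then show ?thesis by (simp add: Psi_XX ij pq)
  qed
  finally show ?thesis .
qed

lemma Dm_XXH: assumes ij: "(i, j) \<in> Pairs4" and kl: "(k, l) \<in> Pairs4" and pq: "(p, q) \<in> Pairs4"
  shows "Dm m (X i j a) (X p q e) (br (X k l c) (X l k d)) = 0"
proof -
  obtain e2 where e2: "br (X p q e) (br (X k l c) (X l k d)) = X p q e2"
    "abs_r2 e2 = (wt k l c d p + wt k l c d q) * abs_r2 e" using RA[OF kl pq] by blast
  obtain e1 where e1: "br (X i j a) (br (X k l c) (X l k d)) = X i j e1"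
    "abs_r2 e1 = (wt k l c d i + wt k l c d j) * abs_r2 a" using RA[OF kl ij] by blast
  have "Dm m (X i j a) (X p q e) (br (X k l c) (X l k d)) =
    Psi m (X i j a) (X p q e2) + Psi m (X i j e1) (X p q e)"
    unfolding Dm_def e1(1) e2(1) Psi_HR[OF Hs_gen[OF kl]] by simp
  also have "\<dots> = 0"
  proof (cases "(i, j, p, q) \<in> P4")
    case True
    have w: "(wt k l c d i + wt k l c d j + wt k l c d p + wt k l c d q) * (abs_r2 a * abs_r2 e) = 0"
      unfolding wsum[OF kl True, of c d] by simp
    have "abs_r2 a * abs_r2 e2 + abs_r2 e1 * abs_r2 e =
      (wt k l c d i + wt k l c d j + wt k l c d p + wt k l c d q) * (abs_r2 a * abs_r2 e)"
      unfolding e1(2) e2(2) by (simp add: algebra_simps)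
    then show ?thesis using True w
      by (simp add: Psi_XX ij pq)
  next
    case False
    then show ?thesis by (simp add: Psi_XX ij pq)
  qed
  finally show ?thesis .
qed

lemma Dm_gen: assumes "g1 \<in> G" "g2 \<in> G" "g3 \<in> G" shows "Dm m g1 g2 g3 = 0"
proof -
  have H: "g \<in> Hgen \<Longrightarrow> \<exists>i j a b. (i, j) \<in> Pairs4 \<and> g = br (X i j a) (X j i b)" for g
    by (auto simp: Hgen_def)
  have XX: "g \<in> Xgen \<Longrightarrow> \<exists>i j a. (i, j) \<in> Pairs4 \<and> g = X i j a" for g
    by (auto simp: Xgen_def)
  have HH': "g \<in> Hgen \<Longrightarrow> g' \<in> Hgen \<Longrightarrow> br g g' \<in> Hs" for g g'
    using H[of g] H[of g'] HH by blast
  have Hin: "g \<in> Hgen \<Longrightarrow> g \<in> Hs" for g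
    using H[of g] Hs_gen by blast
  consider "g1 \<in> Hgen" | "g1 \<in> Xgen" using assms(1) G_def by blast
  then show ?thesis
  proof cases
    case 1
    consider "g2 \<in> Hgen" | "g2 \<in> Xgen" using assms(2) G_def by blast
    then show ?thesis
    proof cases
      case 11: 1
      show ?thesis unfolding Dm_def using 1 11
        by (simp add: Psi_HL Psi_HR Hin HH')
    next
      case 12: 2
      consider "g3 \<in> Hgen" | "g3 \<in> Xgen" using assms(3) G_def by blast
      then show ?thesis
      proof cases
        case 1
        then show ?thesis unfolding Dm_def using \<open>g1 \<in> Hgen\<close>
          by (simp add: Psi_HL Psi_HR Hin HH')
      next
        case 2
        then show ?thesis using \<open>g1 \<in> Hgen\<close> 12 H[of g1] XX[of g2] XX[of g3] Dm_HXX by auto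
      qed
    qed
  next
    case 2
    consider "g2 \<in> Hgen" | "g2 \<in> Xgen" using assms(2) G_def by blast
    then show ?thesis
    proof cases
      case 21: 1
      consider "g3 \<in> Hgen" | "g3 \<in> Xgen" using assms(3) G_def by blast
      then show ?thesis
      proof cases
        case 1
        then show ?thesis unfolding Dm_def using 21
          by (simp add: Psi_HL Psi_HR Hin HH')
      next
        case 3: 2
        then show ?thesis using 2 21 XX[of g1] H[of g2] XX[of g3] Dm_XHX by auto
      qed
    next
      case 22: 2
      consider "g3 \<in> Hgen" | "g3 \<in> Xgen" using assms(3) G_def by blast
      then show ?thesis
      proof cases
        case 1
        then show ?thesis using 2 22 XX[of g1] XX[of g2] H[of g3] Dm_XXH by auto
      next
        case 3: 2
        then show ?thesis using 2 22 XX[of g1] XX[of g2] XX[of g3] Dm_XXX by auto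
      qed
    qed
  qed
qed

end

theorem lemma3p3:
  fixes smul :: "'k::comm_ring_1 \<Rightarrow> 'l::ab_group_add \<Rightarrow> 'l"
    and br :: "'l \<Rightarrow> 'l \<Rightarrow> 'l"
    and sR :: "'k \<Rightarrow> 'r::ring_1 \<Rightarrow> 'r"
    and X :: "nat \<Rightarrow> nat \<Rightarrow> 'r \<Rightarrow> 'l"
    and \<theta> :: "nat \<times> nat \<times> nat \<times> nat \<Rightarrow> nat"
  assumes "K_algebra sR"
    and "free_with_one_basis sR"
    and "leibniz_algebra smul br"
    and "stl4_relations smul br sR X"
    and "stl4_decomposition smul br X"
    and "theta_labelling \<theta>"
  shows "\<forall>x y z. \<forall>m\<in>{1..6}.
           psi_rep smul br X \<theta> m x (br y z) + psi_rep smul br X \<theta> m (br x z) y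
             - psi_rep smul br X \<theta> m (br x y) z \<in> I2"
proof -
  interpret S: stl smul br sR X \<theta>
    by (rule stl.intro[OF assms(1) assms(3) assms(4) assms(5) assms(6)])
  show ?thesis
  proof (intro allI ballI)
    fix x y z m
    have "S.Dm m x y z = 0" by (rule S.all_good) (rule S.Dm_gen)
    then show "psi_rep smul br X \<theta> m x (br y z) + psi_rep smul br X \<theta> m (br x z) y
             - psi_rep smul br X \<theta> m (br x y) z \<in> I2" by (simp add: S.Dm_orig)
  qed
qed


end
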